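(* Let $-\infty\le a<b\le\infty$, let $f,g$ be differentiable on $(a,b)$ with $g'\neq0$ and $g>0$ on $(a,b)$, and let $H_{f,g}=\frac{f'}{g'}g-f$. Assume $f'/g'$ is strictly monotone on $(a,b)$ (so that $H_{f,g}(a^+)=\lim_{x\to a^+}H_{f,g}(x)$ and $H_{f,g}(b^-)=\lim_{x\to b^-}H_{f,g}(x)$ exist in $[-\infty,\infty]$). (i) If $g'>0$ (resp. $g'<0$) on $(a,b)$, then $(f/g)'>0$ (resp. $(f/g)'<0$) on all of $(a,b)$ if and only if $\min(H_{f,g}(a^+),H_{f,g}(b^-))\ge 0$. (ii) If $g'>0$ (resp. $g'<0$) on $(a,b)$, then $(f/g)'<0$ (resp. $(f/g)'>0$) on all of $(a,b)$ if and only if $\max(H_{f,g}(a^+),H_{f,g}(b^-))\le 0$. (iii) If $f'/g'$ is strictly increasing on $(a,b)$, $H_{f,g}(a^+)<0$ and $H_{f,g}(b^-)>0$, then there is a unique $x_0\in(a,b)$ such that, when $g'>0$, $(f/g)'<0$ on $(a,x_0)$ and $(f/g)'>0$ on $(x_0,b)$; and when $g'<0$, $(f/g)'>0$ on $(a,x_0)$ and $(f/g)'<0$ on $(x_0,b)$. (iv) If $f'/g'$ is strictly decreasing on $(a,b)$, $H_{f,g}(a^+)>0$ and $H_{f,g}(b^-)<0$, then there is a unique $x_0\in(a,b)$ such that, when $g'>0$, $(f/g)'>0$ on $(a,x_0)$ and $(f/g)'<0$ on $(x_0,b)$; and when $g'<0$, $(f/g)'<0$ on $(a,x_0)$ and $(f/g)'>0$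 on $(x_0,b)$.
   Context: For differentiable $f,g$ on $(a,b)$ with $g'\ne 0$ there, $H_{f,g}(x)=\frac{f'(x)}{g'(x)}g(x)-f(x)$; $H_{f,g}(a^+)$, $H_{f,g}(b^-)$ denote its one-sided limits at the endpoints (possibly infinite). *)

theory Defs
  imports "HOL-Analysis.Analysis"
begin

definition eint :: "ereal \<Rightarrow> ereal \<Rightarrow> real set" where
  "eint a b = {x. a < ereal x \<and> ereal x < b}"

definition at_lower_end :: "ereal \<Rightarrow> real filter" where
  "at_lower_end a = (if a = -\<infinity> then at_bot else at_right (real_of_ereal a))"

definition at_upper_end :: "ereal \<Rightarrow> real filter" where
  "at_upper_end b = (if b = \<infinity> then at_top else at_left (real_of_ereal b))"

definition H_fg :: "(real \<Rightarrow> real) \<Rightarrow> (real \<Rightarrow> real) \<Rightarrow> (real \<Rightarrow> real) \<Rightarrow> (real \<Rightarrow> real) \<Rightarrow> real \<Rightarrow> real" where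
  "H_fg f f' g g' x = f' x / g' x * g x - f x"

definition H_lower :: "(real \<Rightarrow> real) \<Rightarrow> (real \<Rightarrow> real) \<Rightarrow> (real \<Rightarrow> real) \<Rightarrow> (real \<Rightarrow> real) \<Rightarrow> ereal \<Rightarrow> ereal" where
  "H_lower f f' g g' a = Lim (at_lower_end a) (\<lambda>x. ereal (H_fg f f' g g' x))"

definition H_upper :: "(real \<Rightarrow> real) \<Rightarrow> (real \<Rightarrow> real) \<Rightarrow> (real \<Rightarrow> real) \<Rightarrow> (real \<Rightarrow> real) \<Rightarrow> ereal \<Rightarrow> ereal" where
  "H_upper f f' g g' b = Lim (at_upper_end b) (\<lambda>x. ereal (H_fg f f' g g' x))"

definition strict_incr_on :: "real set \<Rightarrow> (real \<Rightarrow> real) \<Rightarrow> bool" where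
  "strict_incr_on S h = (\<forall>x\<in>S. \<forall>y\<in>S. x < y \<longrightarrow> h x < h y)"

definition strict_decr_on :: "real set \<Rightarrow> (real \<Rightarrow> real) \<Rightarrow> bool" where
  "strict_decr_on S h = (\<forall>x\<in>S. \<forall>y\<in>S. x < y \<longrightarrow> h x > h y)"

end

theory Submission imports Defs begin


lemma eint_conv:
  assumes "x \<in> eint a b" "y \<in> eint a b" "x \<le> z" "z \<le> y"
  shows "z \<in> eint a b"
proof -
  have "ereal x \<le> ereal z" "ereal z \<le> ereal y" using assms by auto
  moreover have "a < ereal x" "ereal y < b" using assms unfolding eint_def by auto
  ultimately have "a < ereal z" "ereal z < b" by (meson less_le_trans, meson le_less_trans)
  then show ?thesis unfolding eint_def by auto
qed

lemma ev_lower: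
  assumes "x0 \<in> eint a b"
  shows "eventually (\<lambda>x. x \<in> eint a b \<and> x < x0) (at_lower_end a)"
proof (cases "a = -\<infinity>")
  case True
  have "\<forall>x\<le>x0 - 1. x \<in> eint a b \<and> x < x0"
    using assms True unfolding eint_def
    by (auto intro: le_less_trans[of _ "ereal x0"])
  then show ?thesis using True unfolding at_lower_end_def
    by (auto simp: eventually_at_bot_linorder)
next
  case False
  from assms have "a < ereal x0" unfolding eint_def by auto
  with False obtain a' where a': "a = ereal a'"
    by (cases a) auto
  with \<open>a < ereal x0\<close> have "a' < x0" by auto
  have "eventually (\<lambda>x. x \<in> {a'<..<x0}) (at_right a')"
    using eventually_at_right_real[OF \<open>a' < x0\<close>] .
  moreover have "x \<in> {a'<..<x0} \<Longrightarrow> x \<in> eint a b \<and> x < x0" for x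
    using assms a' unfolding eint_def by (auto intro: less_trans[of _ "ereal x0"])
  ultimately show ?thesis using False a' unfolding at_lower_end_def
    by (auto elim: eventually_mono)
qed

lemma ev_upper:
  assumes "x0 \<in> eint a b"
  shows "eventually (\<lambda>x. x \<in> eint a b \<and> x > x0) (at_upper_end b)"
proof (cases "b = \<infinity>")
  case True
  have "\<forall>x\<ge>x0 + 1. x \<in> eint a b \<and> x > x0"
    using assms True unfolding eint_def
    by (auto intro: less_le_trans[of _ "ereal x0"])
  then show ?thesis using True unfolding at_upper_end_def
    by (auto simp: eventually_at_top_linorder)
next
  case False
  from assms have "ereal x0 < b" unfolding eint_def by auto
  with False obtain b' where b': "b = ereal b'"
    by (cases b) auto
  with \<open>ereal x0 < b\<close> have "x0 < b'" by auto
  have "eventually (\<lambda>x. x \<in> {x0<..<b'}) (at_left b')"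
    using eventually_at_left_real[OF \<open>x0 < b'\<close>] .
  moreover have "x \<in> {x0<..<b'} \<Longrightarrow> x \<in> eint a b \<and> x > x0" for x
    using assms b' unfolding eint_def by (auto intro: less_trans[of _ "ereal x0"])
  ultimately show ?thesis using False b' unfolding at_upper_end_def
    by (auto elim: eventually_mono)
qed

lemma ntriv_lower: "\<not> trivial_limit (at_lower_end a)"
  unfolding at_lower_end_def by auto
lemma ntriv_upper: "\<not> trivial_limit (at_upper_end a)"
  unfolding at_upper_end_def by auto

lemma lim_lower_inc:
  assumes ab: "a < b" and "strict_incr_on (eint a b) h"
  shows "Lim (at_lower_end a) (\<lambda>x. ereal (h x)) = (INF x\<in>eint a b. ereal (h x))"
proof (rule tendsto_Lim[OF ntriv_lower], rule order_tendstoI)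
  fix y assume y: "y < (INF x\<in>eint a b. ereal (h x))"
  obtain x0 where "x0 \<in> eint a b" using ereal_dense2[OF ab] unfolding eint_def by auto
  show "eventually (\<lambda>x. y < ereal (h x)) (at_lower_end a)"
    using ev_lower[OF \<open>x0 \<in> eint a b\<close>]
  proof (rule eventually_mono)
    fix x assume "x \<in> eint a b \<and> x < x0"
    then have "(INF x\<in>eint a b. ereal (h x)) \<le> ereal (h x)" by (auto intro: INF_lower)
    with y show "y < ereal (h x)" by auto
  qed
next
  fix y assume y: "y > (INF x\<in>eint a b. ereal (h x))"
  then obtain x0 where x0: "x0 \<in> eint a b" "ereal (h x0) < y" by (auto simp: INF_less_iff)
  show "eventually (\<lambda>x. y > ereal (h x)) (at_lower_end a)"
    using ev_lower[OF x0(1)]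
  proof (rule eventually_mono)
    fix x assume "x \<in> eint a b \<and> x < x0"
    then have "h x < h x0" using assms x0 unfolding strict_incr_on_def by auto
    with x0 show "y > ereal (h x)" by (auto intro: less_trans[of _ "ereal (h x0)"])
  qed
qed

lemma lim_upper_inc:
  assumes ab: "a < b" and "strict_incr_on (eint a b) h"
  shows "Lim (at_upper_end b) (\<lambda>x. ereal (h x)) = (SUP x\<in>eint a b. ereal (h x))"
proof (rule tendsto_Lim[OF ntriv_upper], rule order_tendstoI)
  fix y assume y: "y > (SUP x\<in>eint a b. ereal (h x))"
  obtain x0 where "x0 \<in> eint a b" using ereal_dense2[OF ab] unfolding eint_def by auto
  show "eventually (\<lambda>x. y > ereal (h x)) (at_upper_end b)"
    using ev_upper[OF \<open>x0 \<in> eint a b\<close>]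
  proof (rule eventually_mono)
    fix x assume "x \<in> eint a b \<and> x > x0"
    then have "(SUP x\<in>eint a b. ereal (h x)) \<ge> ereal (h x)" by (auto intro: SUP_upper)
    with y show "y > ereal (h x)" by auto
  qed
next
  fix y assume y: "y < (SUP x\<in>eint a b. ereal (h x))"
  then obtain x0 where x0: "x0 \<in> eint a b" "ereal (h x0) > y" by (auto simp: less_SUP_iff)
  show "eventually (\<lambda>x. y < ereal (h x)) (at_upper_end b)"
    using ev_upper[OF x0(1)]
  proof (rule eventually_mono)
    fix x assume "x \<in> eint a b \<and> x > x0"
    then have "h x > h x0" using assms x0 unfolding strict_incr_on_def by auto
    with x0 show "y < ereal (h x)" by (auto intro: less_trans[of _ "ereal (h x0)"])
  qed
qed

lemma lim_lower_dec:
  assumes ab: "a < b" and "strict_decr_on (eint a b) h"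
  shows "Lim (at_lower_end a) (\<lambda>x. ereal (h x)) = (SUP x\<in>eint a b. ereal (h x))"
proof (rule tendsto_Lim[OF ntriv_lower], rule order_tendstoI)
  fix y assume y: "y > (SUP x\<in>eint a b. ereal (h x))"
  obtain x0 where "x0 \<in> eint a b" using ereal_dense2[OF ab] unfolding eint_def by auto
  show "eventually (\<lambda>x. y > ereal (h x)) (at_lower_end a)"
    using ev_lower[OF \<open>x0 \<in> eint a b\<close>]
  proof (rule eventually_mono)
    fix x assume "x \<in> eint a b \<and> x < x0"
    then have "(SUP x\<in>eint a b. ereal (h x)) \<ge> ereal (h x)" by (auto intro: SUP_upper)
    with y show "y > ereal (h x)" by auto
  qed
next
  fix y assume y: "y < (SUP x\<in>eint a b. ereal (h x))"
  then obtain x0 where x0: "x0 \<in> eint a b" "ereal (h x0) > y" by (auto simp: less_SUP_iff)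
  show "eventually (\<lambda>x. y < ereal (h x)) (at_lower_end a)"
    using ev_lower[OF x0(1)]
  proof (rule eventually_mono)
    fix x assume "x \<in> eint a b \<and> x < x0"
    then have "h x > h x0" using assms x0 unfolding strict_decr_on_def by auto
    with x0 show "y < ereal (h x)" by (auto intro: less_trans[of _ "ereal (h x0)"])
  qed
qed

lemma lim_upper_dec:
  assumes ab: "a < b" and "strict_decr_on (eint a b) h"
  shows "Lim (at_upper_end b) (\<lambda>x. ereal (h x)) = (INF x\<in>eint a b. ereal (h x))"
proof (rule tendsto_Lim[OF ntriv_upper], rule order_tendstoI)
  fix y assume y: "y < (INF x\<in>eint a b. ereal (h x))"
  obtain x0 where "x0 \<in> eint a b" using ereal_dense2[OF ab] unfolding eint_def by auto
  show "eventually (\<lambda>x. y < ereal (h x)) (at_upper_end b)"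
    using ev_upper[OF \<open>x0 \<in> eint a b\<close>]
  proof (rule eventually_mono)
    fix x assume "x \<in> eint a b \<and> x > x0"
    then have "(INF x\<in>eint a b. ereal (h x)) \<le> ereal (h x)" by (auto intro: INF_lower)
    with y show "y < ereal (h x)" by auto
  qed
next
  fix y assume y: "y > (INF x\<in>eint a b. ereal (h x))"
  then obtain x0 where x0: "x0 \<in> eint a b" "ereal (h x0) < y" by (auto simp: INF_less_iff)
  show "eventually (\<lambda>x. y > ereal (h x)) (at_upper_end b)"
    using ev_upper[OF x0(1)]
  proof (rule eventually_mono)
    fix x assume "x \<in> eint a b \<and> x > x0"
    then have "h x < h x0" using assms x0 unfolding strict_decr_on_def by auto
    with x0 show "y > ereal (h x)" by (auto intro: less_trans[of _ "ereal (h x0)"])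
  qed
qed



lemma H_strict:
  assumes df: "\<forall>x\<in>eint a b. (f has_real_derivative f' x) (at x)"
    and dg: "\<forall>x\<in>eint a b. (g has_real_derivative g' x) (at x)"
    and g'nz: "\<forall>x\<in>eint a b. g' x \<noteq> 0"
    and gpos: "\<forall>x\<in>eint a b. g x > 0"
    and x: "x \<in> eint a b" and y: "y \<in> eint a b" and xy: "x < y"
  obtains c where "x < c" "c < y"
    "H_fg f f' g g' y - H_fg f f' g g' x = (f' y / g' y - f' c / g' c) * g y + (f' c / g' c - f' x / g' x) * g x"
proof -
  have I: "z \<in> eint a b" if "x \<le> z" "z \<le> y" for z using eint_conv[OF x y that] .
  have "\<exists>c. x < c \<and> c < y \<and> (f y - f x) * g' c = (g y - g x) * f' c"
    by (rule GMVT'[OF xy]) (use I df dg in \<open>auto intro: DERIV_isCont\<close>)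
  then obtain c where c: "x < c" "c < y" "(f y - f x) * g' c = (g y - g x) * f' c" by auto
  have "g' c \<noteq> 0" using g'nz I c by auto
  then have eq: "f y - f x = (g y - g x) * (f' c / g' c)"
    by (metis c(3) nonzero_mult_div_cancel_right times_divide_eq_right)
  define rc where "rc = f' c / g' c"
  have eq': "f y - f x = (g y - g x) * rc" using eq unfolding rc_def .
  have "H_fg f f' g g' y - H_fg f f' g g' x = (f' y / g' y - rc) * g y + (rc - f' x / g' x) * g x"
    unfolding H_fg_def using eq' by (simp add: algebra_simps)
  then have "H_fg f f' g g' y - H_fg f f' g g' x = (f' y / g' y - f' c / g' c) * g y + (f' c / g' c - f' x / g' x) * g x"
    unfolding rc_def .
  with c show ?thesis using that by auto
qed

lemma H_incr:
  assumes df: "\<forall>x\<in>eint a b. (f has_real_derivative f' x) (at x)"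
    and dg: "\<forall>x\<in>eint a b. (g has_real_derivative g' x) (at x)"
    and g'nz: "\<forall>x\<in>eint a b. g' x \<noteq> 0"
    and gpos: "\<forall>x\<in>eint a b. g x > 0"
    and r: "strict_incr_on (eint a b) (\<lambda>x. f' x / g' x)"
  shows "strict_incr_on (eint a b) (H_fg f f' g g')"
  unfolding strict_incr_on_def
proof (intro ballI impI)
  fix x y assume x: "x \<in> eint a b" and y: "y \<in> eint a b" and xy: "x < y"
  obtain c where c: "x < c" "c < y"
    "H_fg f f' g g' y - H_fg f f' g g' x = (f' y / g' y - f' c / g' c) * g y + (f' c / g' c - f' x / g' x) * g x"
    using H_strict[OF df dg g'nz gpos x y xy] by blast
  have cI: "c \<in> eint a b" using eint_conv[OF x y] c by auto
  have "0 < (f' y / g' y - f' c / g' c) * g y" using r cI y c gpos unfolding strict_incr_on_def by auto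
  moreover have "0 < (f' c / g' c - f' x / g' x) * g x" using r cI x c gpos unfolding strict_incr_on_def by auto
  ultimately show "H_fg f f' g g' x < H_fg f f' g g' y" using c(3) by linarith
qed

lemma H_decr:
  assumes df: "\<forall>x\<in>eint a b. (f has_real_derivative f' x) (at x)"
    and dg: "\<forall>x\<in>eint a b. (g has_real_derivative g' x) (at x)"
    and g'nz: "\<forall>x\<in>eint a b. g' x \<noteq> 0"
    and gpos: "\<forall>x\<in>eint a b. g x > 0"
    and r: "strict_decr_on (eint a b) (\<lambda>x. f' x / g' x)"
  shows "strict_decr_on (eint a b) (H_fg f f' g g')"
  unfolding strict_decr_on_def
proof (intro ballI impI)
  fix x y assume x: "x \<in> eint a b" and y: "y \<in> eint a b" and xy: "x < y"
  obtain c where c: "x < c" "c < y"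
    "H_fg f f' g g' y - H_fg f f' g g' x = (f' y / g' y - f' c / g' c) * g y + (f' c / g' c - f' x / g' x) * g x"
    using H_strict[OF df dg g'nz gpos x y xy] by blast
  have cI: "c \<in> eint a b" using eint_conv[OF x y] c by auto
  have "0 > (f' y / g' y - f' c / g' c) * g y" using r cI y c gpos unfolding strict_decr_on_def
    by (auto simp: mult_neg_pos)
  moreover have "0 > (f' c / g' c - f' x / g' x) * g x" using r cI x c gpos unfolding strict_decr_on_def
    by (auto simp: mult_neg_pos)
  ultimately show "H_fg f f' g g' x > H_fg f f' g g' y" using c(3) by linarith
qed

lemma deriv_eq:
  assumes df: "(f has_real_derivative f' x) (at x)"
    and dg: "(g has_real_derivative g' x) (at x)"
    and "g' x \<noteq> 0" "g x > 0"
  shows "deriv (\<lambda>t. f t / g t) x = g' x * H_fg f f' g g' x / (g x * g x)"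
proof -
  have "deriv (\<lambda>t. f t / g t) x = (f' x * g x - f x * g' x) / (g x * g x)"
    by (rule DERIV_imp_deriv, rule DERIV_divide[OF df dg]) (use assms in auto)
  also have "f' x * g x - f x * g' x = g' x * H_fg f f' g g' x"
    unfolding H_fg_def using assms by (simp add: field_simps)
  finally show ?thesis .
qed

lemma eint_mono:
  assumes "a \<le> a'" "b' \<le> b" "x \<in> eint a' b'"
  shows "x \<in> eint a b"
proof -
  have h: "a' < ereal x" "ereal x < b'" using assms(3) unfolding eint_def by auto
  have "a < ereal x" using order_le_less_trans[OF assms(1) h(1)] .
  moreover have "ereal x < b" using order_less_le_trans[OF h(2) assms(2)] .
  ultimately show ?thesis unfolding eint_def by auto
qed
lemma eint_lo: "x \<in> eint a b \<Longrightarrow> a \<le> ereal x" unfolding eint_def by auto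
lemma eint_hi: "x \<in> eint a b \<Longrightarrow> ereal x \<le> b" unfolding eint_def by auto
lemma eint_subL: "x0 \<in> eint a b \<Longrightarrow> x \<in> eint a (ereal x0) \<Longrightarrow> x \<in> eint a b"
  by (rule eint_mono[OF order_refl eint_hi])
lemma eint_subR: "x0 \<in> eint a b \<Longrightarrow> x \<in> eint (ereal x0) b \<Longrightarrow> x \<in> eint a b"
  by (rule eint_mono[OF eint_lo order_refl])

lemma ex1_cross:
  assumes h: "strict_incr_on (eint a b) h"
    and p: "p \<in> eint a b" "h p < 0" and q: "q \<in> eint a b" "h q > 0"
  shows "\<exists>!x0\<in>eint a b. (\<forall>x\<in>eint a (ereal x0). h x < 0) \<and> (\<forall>x\<in>eint (ereal x0) b. h x > 0)"
proof -
  define S where "S = {x\<in>eint a b. h x < 0}"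
  define x0 where "x0 = Sup S"
  have Sq: "s < q" if "s \<in> S" for s
  proof (rule ccontr)
    assume "\<not> s < q"
    then have "q \<le> s" by auto
    have "h q \<le> h s"
    proof (cases "q = s")
      case False
      then have "q < s" using \<open>q \<le> s\<close> by auto
      then show ?thesis using h that q unfolding S_def strict_incr_on_def by force
    qed auto
    then show False using that q unfolding S_def by auto
  qed
  have pS: "p \<in> S" using p unfolding S_def by auto
  have bdd: "bdd_above S" using Sq by (auto intro!: bdd_aboveI[of _ q] less_imp_le)
  have "p \<le> x0" unfolding x0_def using cSup_upper[OF pS bdd] .
  moreover have "x0 \<le> q" unfolding x0_def by (rule cSup_least) (use Sq pS in \<open>auto intro: less_imp_le\<close>)
  ultimately have x0I: "x0 \<in> eint a b" using eint_conv[OF p(1) q(1)] by auto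
  have left: "\<forall>x\<in>eint a (ereal x0). h x < 0"
  proof
    fix x assume x: "x \<in> eint a (ereal x0)"
    then have "x < x0" unfolding eint_def by auto
    then obtain s where s: "s \<in> S" "x < s" using less_cSup_iff[of S x] pS bdd unfolding x0_def by auto
    have xI: "x \<in> eint a b" using eint_subL[OF x0I x] .
    have "h x < h s" using h s xI unfolding S_def strict_incr_on_def by auto
    with s show "h x < 0" unfolding S_def by auto
  qed
  have right: "\<forall>x\<in>eint (ereal x0) b. h x > 0"
  proof
    fix x assume x: "x \<in> eint (ereal x0) b"
    then have "x0 < x" unfolding eint_def by auto
    define y where "y = (x0 + x) / 2"
    have y: "x0 < y" "y < x" using \<open>x0 < x\<close> unfolding y_def by auto
    have xI: "x \<in> eint a b" using eint_subR[OF x0I x] .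
    have yI: "y \<in> eint a b" using eint_conv[OF x0I xI] y by auto
    have "y \<notin> S" using cSup_upper[OF _ bdd, of y] y unfolding x0_def by auto
    then have "h y \<ge> 0" using yI unfolding S_def by auto
    moreover have "h y < h x" using h y xI yI unfolding strict_incr_on_def by auto
    ultimately show "h x > 0" by auto
  qed
  show ?thesis
  proof (rule ex1I[of _ x0])
    show "x0 \<in> eint a b \<and> (\<forall>x\<in>eint a (ereal x0). h x < 0) \<and> (\<forall>x\<in>eint (ereal x0) b. 0 < h x)"
      using x0I left right by auto
  next
    fix x1 assume x1: "x1 \<in> eint a b \<and> (\<forall>x\<in>eint a (ereal x1). h x < 0) \<and> (\<forall>x\<in>eint (ereal x1) b. 0 < h x)"
    show "x1 = x0"
    proof (rule ccontr)
      assume "x1 \<noteq> x0"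
      then consider "x1 < x0" | "x0 < x1" by linarith
      then show False
      proof cases
        case 1
        define m where "m = (x1 + x0) / 2"
        have m: "x1 < m" "m < x0" using 1 unfolding m_def by auto
        have "m \<in> eint (ereal x1) (ereal x0)" using m unfolding eint_def by auto
        then have "m \<in> eint a (ereal x0)" "m \<in> eint (ereal x1) b"
          using eint_mono[where a=a and a'="ereal x1" and b'="ereal x0" and b="ereal x0" and x=m]
                eint_mono[where a="ereal x1" and a'="ereal x1" and b'="ereal x0" and b=b and x=m]
                eint_lo[of x1 a b] eint_hi[of x0 a b] x1 x0I by auto
        then show False using left x1 by force
      next
        case 2
        define m where "m = (x1 + x0) / 2"
        have m: "x0 < m" "m < x1" using 2 unfolding m_def by auto
        have "m \<in> eint (ereal x0) (ereal x1)" using m unfolding eint_def by auto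
        then have "m \<in> eint a (ereal x1)" "m \<in> eint (ereal x0) b"
          using eint_mono[where a=a and a'="ereal x0" and b'="ereal x1" and b="ereal x1" and x=m]
                eint_mono[where a="ereal x0" and a'="ereal x0" and b'="ereal x1" and b=b and x=m]
                eint_lo[of x0 a b] eint_hi[of x1 a b] x1 x0I by auto
        then show False using right x1 by force
      qed
    qed
  qed
qed

lemma lohi:
  assumes "\<forall>x\<in>I. lo < ereal (H x) \<and> ereal (H x) < hi"
    and "\<forall>c. c > lo \<longrightarrow> (\<exists>x\<in>I. ereal (H x) < c)"
    and "\<forall>c. c < hi \<longrightarrow> (\<exists>x\<in>I. ereal (H x) > c)"
  shows "(\<forall>x\<in>I. H x > 0) \<longleftrightarrow> lo \<ge> 0" "(\<forall>x\<in>I. H x < 0) \<longleftrightarrow> hi \<le> 0"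
proof -
  show "(\<forall>x\<in>I. H x > 0) \<longleftrightarrow> lo \<ge> 0"
  proof
    assume A: "\<forall>x\<in>I. H x > 0"
    show "lo \<ge> 0"
    proof (rule ccontr)
      assume "\<not> lo \<ge> 0"
      then obtain x where "x \<in> I" "ereal (H x) < 0" using assms(2) by (auto simp: not_le)
      with A show False by auto
    qed
  next
    assume "lo \<ge> 0"
    show "\<forall>x\<in>I. H x > 0"
    proof
      fix x assume "x \<in> I"
      then have "lo < ereal (H x)" using assms(1) by auto
      with \<open>lo \<ge> 0\<close> have "0 < ereal (H x)" by (rule order_le_less_trans)
      then show "H x > 0" by simp
    qed
  qed
  show "(\<forall>x\<in>I. H x < 0) \<longleftrightarrow> hi \<le> 0"
  proof
    assume A: "\<forall>x\<in>I. H x < 0"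
    show "hi \<le> 0"
    proof (rule ccontr)
      assume "\<not> hi \<le> 0"
      then obtain x where "x \<in> I" "ereal (H x) > 0" using assms(3) by (auto simp: not_le)
      with A show False by auto
    qed
  next
    assume "hi \<le> 0"
    show "\<forall>x\<in>I. H x < 0"
    proof
      fix x assume "x \<in> I"
      then have "ereal (H x) < hi" using assms(1) by auto
      with \<open>hi \<le> 0\<close> have "ereal (H x) < 0" by (meson order_less_le_trans)
      then show "H x < 0" by simp
    qed
  qed
qed



lemma ex1_cong: "(\<forall>x\<in>A. P x \<longleftrightarrow> Q x) \<Longrightarrow> (\<exists>!x\<in>A. P x) \<longleftrightarrow> (\<exists>!x\<in>A. Q x)"
  by metis

theorem mainTheorem2:
  fixes a b :: ereal and f f' g g' :: "real \<Rightarrow> real"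
  assumes ab: "a < b"
    and df: "\<forall>x\<in>eint a b. (f has_real_derivative f' x) (at x)"
    and dg: "\<forall>x\<in>eint a b. (g has_real_derivative g' x) (at x)"
    and g'nz: "\<forall>x\<in>eint a b. g' x \<noteq> 0"
    and gpos: "\<forall>x\<in>eint a b. g x > 0"
    and mono: "strict_incr_on (eint a b) (\<lambda>x. f' x / g' x) \<or> strict_decr_on (eint a b) (\<lambda>x. f' x / g' x)"
  shows
   "((\<forall>x\<in>eint a b. g' x > 0) \<longrightarrow>
       ((\<forall>x\<in>eint a b. deriv (\<lambda>t. f t / g t) x > 0) \<longleftrightarrow> min (H_lower f f' g g' a) (H_upper f f' g g' b) \<ge> 0)) \<and>
    ((\<forall>x\<in>eint a b. g' x < 0) \<longrightarrow>
       ((\<forall>x\<in>eint a b. deriv (\<lambda>t. f t / g t) x < 0) \<longleftrightarrow> min (H_lower f f' g g' a) (H_upper f f' g g' b) \<ge> 0)) \<and>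
    ((\<forall>x\<in>eint a b. g' x > 0) \<longrightarrow>
       ((\<forall>x\<in>eint a b. deriv (\<lambda>t. f t / g t) x < 0) \<longleftrightarrow> max (H_lower f f' g g' a) (H_upper f f' g g' b) \<le> 0)) \<and>
    ((\<forall>x\<in>eint a b. g' x < 0) \<longrightarrow>
       ((\<forall>x\<in>eint a b. deriv (\<lambda>t. f t / g t) x > 0) \<longleftrightarrow> max (H_lower f f' g g' a) (H_upper f f' g g' b) \<le> 0)) \<and>
    ((strict_incr_on (eint a b) (\<lambda>x. f' x / g' x) \<and> H_lower f f' g g' a < 0 \<and> H_upper f f' g g' b > 0) \<longrightarrow>
       ((\<forall>x\<in>eint a b. g' x > 0) \<longrightarrow>
          (\<exists>!x0\<in>eint a b. (\<forall>x\<in>eint a (ereal x0). deriv (\<lambda>t. f t / g t) x < 0) \<and>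
                            (\<forall>x\<in>eint (ereal x0) b. deriv (\<lambda>t. f t / g t) x > 0))) \<and>
       ((\<forall>x\<in>eint a b. g' x < 0) \<longrightarrow>
          (\<exists>!x0\<in>eint a b. (\<forall>x\<in>eint a (ereal x0). deriv (\<lambda>t. f t / g t) x > 0) \<and>
                            (\<forall>x\<in>eint (ereal x0) b. deriv (\<lambda>t. f t / g t) x < 0)))) \<and>
    ((strict_decr_on (eint a b) (\<lambda>x. f' x / g' x) \<and> H_lower f f' g g' a > 0 \<and> H_upper f f' g g' b < 0) \<longrightarrow>
       ((\<forall>x\<in>eint a b. g' x > 0) \<longrightarrow>
          (\<exists>!x0\<in>eint a b. (\<forall>x\<in>eint a (ereal x0). deriv (\<lambda>t. f t / g t) x > 0) \<and>
                            (\<forall>x\<in>eint (ereal x0) b. deriv (\<lambda>t. f t / g t) x < 0))) \<and>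
       ((\<forall>x\<in>eint a b. g' x < 0) \<longrightarrow>
          (\<exists>!x0\<in>eint a b. (\<forall>x\<in>eint a (ereal x0). deriv (\<lambda>t. f t / g t) x < 0) \<and>
                            (\<forall>x\<in>eint (ereal x0) b. deriv (\<lambda>t. f t / g t) x > 0))))"
proof -
  define I where "I = eint a b"
  define H where "H = H_fg f f' g g'"
  define D where "D = deriv (\<lambda>t. f t / g t)"
  define L where "L = H_lower f f' g g' a"
  define U where "U = H_upper f f' g g' b"
  have Ldef: "L = Lim (at_lower_end a) (\<lambda>x. ereal (H x))" unfolding L_def H_lower_def H_def ..
  have Udef: "U = Lim (at_upper_end b) (\<lambda>x. ereal (H x))" unfolding U_def H_upper_def H_def ..
  obtain x00 where x00: "x00 \<in> I" using ereal_dense2[OF ab] unfolding I_def eint_def by auto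
  have dv: "D x = g' x * H x / (g x * g x)" if "x \<in> I" for x
    unfolding D_def H_def by (rule deriv_eq) (use that df dg g'nz gpos I_def in auto)
  have s1: "(D x > 0 \<longleftrightarrow> H x > 0) \<and> (D x < 0 \<longleftrightarrow> H x < 0)" if "x \<in> I" "g' x > 0" for x
  proof -
    have "g x * g x > 0" using gpos that I_def by auto
    then show ?thesis using dv[OF that(1)] that(2)
      by (auto simp: zero_less_divide_iff divide_less_0_iff zero_less_mult_iff mult_less_0_iff)
  qed
  have s2: "(D x > 0 \<longleftrightarrow> H x < 0) \<and> (D x < 0 \<longleftrightarrow> H x > 0)" if "x \<in> I" "g' x < 0" for x
  proof -
    have "g x * g x > 0" using gpos that I_def by auto
    then show ?thesis using dv[OF that(1)] that(2)
      by (auto simp: zero_less_divide_iff divide_less_0_iff zero_less_mult_iff mult_less_0_iff)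
  qed
  have below: "\<exists>x'\<in>I. x' < x" if "x \<in> I" for x
  proof -
    from that have "a < ereal x" unfolding I_def eint_def by auto
    then obtain x' where "a < ereal x'" "ereal x' < ereal x" using ereal_dense2 by blast
    then show ?thesis using eint_subL[of x a b x'] that unfolding I_def eint_def by auto
  qed
  have above: "\<exists>x'\<in>I. x' > x" if "x \<in> I" for x
  proof -
    from that have "ereal x < b" unfolding I_def eint_def by auto
    then obtain x' where "ereal x < ereal x'" "ereal x' < b" using ereal_dense2 by blast
    then show ?thesis using eint_subR[of x a b x'] that unfolding I_def eint_def by auto
  qed
  have Hinc: "strict_incr_on I H" if "strict_incr_on I (\<lambda>x. f' x / g' x)"
    using H_incr[OF df dg g'nz gpos] that unfolding I_def H_def by auto
  have Hdec: "strict_decr_on I H" if "strict_decr_on I (\<lambda>x. f' x / g' x)"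
    using H_decr[OF df dg g'nz gpos] that unfolding I_def H_def by auto
  have LUinc: "L = (INF x\<in>I. ereal (H x)) \<and> U = (SUP x\<in>I. ereal (H x))"
    if "strict_incr_on I H" for dummy :: bool
    using lim_lower_inc[OF ab, of H] lim_upper_inc[OF ab, of H] that Ldef Udef I_def by auto
  have LUdec: "L = (SUP x\<in>I. ereal (H x)) \<and> U = (INF x\<in>I. ereal (H x))"
    if "strict_decr_on I H" for dummy :: bool
    using lim_lower_dec[OF ab, of H] lim_upper_dec[OF ab, of H] that Ldef Udef I_def by auto
  have "\<exists>lo hi. (\<forall>x\<in>I. lo < ereal (H x) \<and> ereal (H x) < hi)
     \<and> (\<forall>c. c > lo \<longrightarrow> (\<exists>x\<in>I. ereal (H x) < c))
     \<and> (\<forall>c. c < hi \<longrightarrow> (\<exists>x\<in>I. ereal (H x) > c)) \<and> min L U = lo \<and> max L U = hi"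
  proof -
    define lo where "lo = (INF x\<in>I. ereal (H x))"
    define hi where "hi = (SUP x\<in>I. ereal (H x))"
    have lohi: "(\<forall>x\<in>I. lo < ereal (H x) \<and> ereal (H x) < hi)" if h: "strict_incr_on I H"
    proof
      fix x assume x: "x \<in> I"
      obtain x1 where x1: "x1 \<in> I" "x1 < x" using below[OF x] by auto
      obtain x2 where x2: "x2 \<in> I" "x2 > x" using above[OF x] by auto
      have "lo \<le> ereal (H x1)" unfolding lo_def using x1 by (auto intro: INF_lower)
      moreover have "H x1 < H x" using h x1 x unfolding strict_incr_on_def by auto
      moreover have "ereal (H x2) \<le> hi" unfolding hi_def using x2 by (auto intro: SUP_upper)
      moreover have "H x < H x2" using h x2 x unfolding strict_incr_on_def by auto
      ultimately have "ereal (H x1) < ereal (H x)" "ereal (H x) < ereal (H x2)"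
        "lo \<le> ereal (H x1)" "ereal (H x2) \<le> hi" by auto
      then show "lo < ereal (H x) \<and> ereal (H x) < hi"
        by (meson le_less_trans less_le_trans)
    qed
    have lohi': "(\<forall>x\<in>I. lo < ereal (H x) \<and> ereal (H x) < hi)" if h: "strict_decr_on I H"
    proof
      fix x assume x: "x \<in> I"
      obtain x1 where x1: "x1 \<in> I" "x1 < x" using below[OF x] by auto
      obtain x2 where x2: "x2 \<in> I" "x2 > x" using above[OF x] by auto
      have "lo \<le> ereal (H x2)" unfolding lo_def using x2 by (auto intro: INF_lower)
      moreover have "H x2 < H x" using h x2 x unfolding strict_decr_on_def by auto
      moreover have "ereal (H x1) \<le> hi" unfolding hi_def using x1 by (auto intro: SUP_upper)
      moreover have "H x < H x1" using h x1 x unfolding strict_decr_on_def by auto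
      ultimately have "ereal (H x2) < ereal (H x)" "ereal (H x) < ereal (H x1)"
        "lo \<le> ereal (H x2)" "ereal (H x1) \<le> hi" by auto
      then show "lo < ereal (H x) \<and> ereal (H x) < hi"
        by (meson le_less_trans less_le_trans)
    qed
    have app: "(\<forall>c. c > lo \<longrightarrow> (\<exists>x\<in>I. ereal (H x) < c)) \<and> (\<forall>c. c < hi \<longrightarrow> (\<exists>x\<in>I. ereal (H x) > c))"
      unfolding lo_def hi_def by (auto simp: INF_less_iff less_SUP_iff)
    have "lo \<le> hi" unfolding lo_def hi_def using x00 by (meson INF_lower SUP_upper order_trans)
    show ?thesis
    proof (cases "strict_incr_on I (\<lambda>x. f' x / g' x)")
      case True
      then have "L = lo" "U = hi" using LUinc Hinc unfolding lo_def hi_def by auto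
      then show ?thesis using lohi Hinc True app \<open>lo \<le> hi\<close> by (auto simp: min_def max_def)
    next
      case False
      then have dec: "strict_decr_on I (\<lambda>x. f' x / g' x)" using mono I_def by auto
      then have "L = hi" "U = lo" using LUdec Hdec unfolding lo_def hi_def by auto
      then show ?thesis using lohi' Hdec dec app \<open>lo \<le> hi\<close> by (auto simp: min_def max_def)
    qed
  qed
  then obtain lo hi where lh: "\<forall>x\<in>I. lo < ereal (H x) \<and> ereal (H x) < hi"
     "\<forall>c. c > lo \<longrightarrow> (\<exists>x\<in>I. ereal (H x) < c)"
     "\<forall>c. c < hi \<longrightarrow> (\<exists>x\<in>I. ereal (H x) > c)" and mm: "min L U = lo" "max L U = hi"
    by blast
  note LH = lohi[OF lh]
  have P1: "(\<forall>x\<in>I. g' x > 0) \<longrightarrow> ((\<forall>x\<in>I. D x > 0) \<longleftrightarrow> min L U \<ge> 0)"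
    using s1 LH mm by auto
  have P2: "(\<forall>x\<in>I. g' x < 0) \<longrightarrow> ((\<forall>x\<in>I. D x < 0) \<longleftrightarrow> min L U \<ge> 0)"
    using s2 LH mm by auto
  have P3: "(\<forall>x\<in>I. g' x > 0) \<longrightarrow> ((\<forall>x\<in>I. D x < 0) \<longleftrightarrow> max L U \<le> 0)"
    using s1 LH mm by auto
  have P4: "(\<forall>x\<in>I. g' x < 0) \<longrightarrow> ((\<forall>x\<in>I. D x > 0) \<longleftrightarrow> max L U \<le> 0)"
    using s2 LH mm by auto
  have P5: "(strict_incr_on I (\<lambda>x. f' x / g' x) \<and> L < 0 \<and> U > 0) \<longrightarrow>
       ((\<forall>x\<in>I. g' x > 0) \<longrightarrow>
          (\<exists>!x0\<in>I. (\<forall>x\<in>eint a (ereal x0). D x < 0) \<and> (\<forall>x\<in>eint (ereal x0) b. D x > 0))) \<and>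
       ((\<forall>x\<in>I. g' x < 0) \<longrightarrow>
          (\<exists>!x0\<in>I. (\<forall>x\<in>eint a (ereal x0). D x > 0) \<and> (\<forall>x\<in>eint (ereal x0) b. D x < 0)))"
  proof (intro impI conjI)
    assume A: "strict_incr_on I (\<lambda>x. f' x / g' x) \<and> L < 0 \<and> U > 0"
    then have hi: "strict_incr_on I H" using Hinc by auto
    then have LU: "L = (INF x\<in>I. ereal (H x))" "U = (SUP x\<in>I. ereal (H x))" using LUinc by auto
    obtain p where p: "p \<in> I" "ereal (H p) < 0" using A LU by (auto simp: INF_less_iff)
    obtain q where q: "q \<in> I" "ereal (H q) > 0" using A LU by (auto simp: less_SUP_iff)
    have E: "\<exists>!x0\<in>I. (\<forall>x\<in>eint a (ereal x0). H x < 0) \<and> (\<forall>x\<in>eint (ereal x0) b. H x > 0)"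
      using ex1_cross[of a b H p q] hi p q unfolding I_def by auto
    {
      assume g: "\<forall>x\<in>I. g' x > 0"
      show "\<exists>!x0\<in>I. (\<forall>x\<in>eint a (ereal x0). D x < 0) \<and> (\<forall>x\<in>eint (ereal x0) b. D x > 0)"
      proof -
        have EQ: "\<forall>x0\<in>I. ((\<forall>x\<in>eint a (ereal x0). D x < 0) \<and> (\<forall>x\<in>eint (ereal x0) b. D x > 0)) \<longleftrightarrow>
              ((\<forall>x\<in>eint a (ereal x0). H x < 0) \<and> (\<forall>x\<in>eint (ereal x0) b. H x > 0))"
        proof
          fix x0 assume x0: "x0 \<in> I"
          show "((\<forall>x\<in>eint a (ereal x0). D x < 0) \<and> (\<forall>x\<in>eint (ereal x0) b. D x > 0)) \<longleftrightarrow>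
              ((\<forall>x\<in>eint a (ereal x0). H x < 0) \<and> (\<forall>x\<in>eint (ereal x0) b. H x > 0))"
            using s1 g eint_subL[of x0 a b] eint_subR[of x0 a b] x0 unfolding I_def by meson
        qed
        show ?thesis using ex1_cong[OF EQ] E by blast
      qed
    }
    {
      assume g: "\<forall>x\<in>I. g' x < 0"
      show "\<exists>!x0\<in>I. (\<forall>x\<in>eint a (ereal x0). D x > 0) \<and> (\<forall>x\<in>eint (ereal x0) b. D x < 0)"
      proof -
        have EQ: "\<forall>x0\<in>I. ((\<forall>x\<in>eint a (ereal x0). D x > 0) \<and> (\<forall>x\<in>eint (ereal x0) b. D x < 0)) \<longleftrightarrow>
              ((\<forall>x\<in>eint a (ereal x0). H x < 0) \<and> (\<forall>x\<in>eint (ereal x0) b. H x > 0))"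
        proof
          fix x0 assume x0: "x0 \<in> I"
          show "((\<forall>x\<in>eint a (ereal x0). D x > 0) \<and> (\<forall>x\<in>eint (ereal x0) b. D x < 0)) \<longleftrightarrow>
              ((\<forall>x\<in>eint a (ereal x0). H x < 0) \<and> (\<forall>x\<in>eint (ereal x0) b. H x > 0))"
            using s2 g eint_subL[of x0 a b] eint_subR[of x0 a b] x0 unfolding I_def by meson
        qed
        show ?thesis using ex1_cong[OF EQ] E by blast
      qed
    }
  qed
  have P6: "(strict_decr_on I (\<lambda>x. f' x / g' x) \<and> L > 0 \<and> U < 0) \<longrightarrow>
       ((\<forall>x\<in>I. g' x > 0) \<longrightarrow>
          (\<exists>!x0\<in>I. (\<forall>x\<in>eint a (ereal x0). D x > 0) \<and> (\<forall>x\<in>eint (ereal x0) b. D x < 0))) \<and>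
       ((\<forall>x\<in>I. g' x < 0) \<longrightarrow>
          (\<exists>!x0\<in>I. (\<forall>x\<in>eint a (ereal x0). D x < 0) \<and> (\<forall>x\<in>eint (ereal x0) b. D x > 0)))"
  proof (intro impI conjI)
    assume A: "strict_decr_on I (\<lambda>x. f' x / g' x) \<and> L > 0 \<and> U < 0"
    then have hd: "strict_decr_on I H" using Hdec by auto
    then have hi: "strict_incr_on I (\<lambda>x. - H x)" unfolding strict_decr_on_def strict_incr_on_def by auto
    have LU: "L = (SUP x\<in>I. ereal (H x))" "U = (INF x\<in>I. ereal (H x))" using LUdec hd by auto
    obtain p where p: "p \<in> I" "ereal (H p) > 0" using A LU by (auto simp: less_SUP_iff)
    obtain q where q: "q \<in> I" "ereal (H q) < 0" using A LU by (auto simp: INF_less_iff)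
    have E0: "\<exists>!x0\<in>I. (\<forall>x\<in>eint a (ereal x0). - H x < 0) \<and> (\<forall>x\<in>eint (ereal x0) b. - H x > 0)"
      using ex1_cross[of a b "\<lambda>x. - H x" p q] hi p q unfolding I_def by auto
    then have E: "\<exists>!x0\<in>I. (\<forall>x\<in>eint a (ereal x0). H x > 0) \<and> (\<forall>x\<in>eint (ereal x0) b. H x < 0)"
      by simp
    {
      assume g: "\<forall>x\<in>I. g' x > 0"
      show "\<exists>!x0\<in>I. (\<forall>x\<in>eint a (ereal x0). D x > 0) \<and> (\<forall>x\<in>eint (ereal x0) b. D x < 0)"
      proof -
        have EQ: "\<forall>x0\<in>I. ((\<forall>x\<in>eint a (ereal x0). D x > 0) \<and> (\<forall>x\<in>eint (ereal x0) b. D x < 0)) \<longleftrightarrow>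
              ((\<forall>x\<in>eint a (ereal x0). H x > 0) \<and> (\<forall>x\<in>eint (ereal x0) b. H x < 0))"
        proof
          fix x0 assume x0: "x0 \<in> I"
          show "((\<forall>x\<in>eint a (ereal x0). D x > 0) \<and> (\<forall>x\<in>eint (ereal x0) b. D x < 0)) \<longleftrightarrow>
              ((\<forall>x\<in>eint a (ereal x0). H x > 0) \<and> (\<forall>x\<in>eint (ereal x0) b. H x < 0))"
            using s1 g eint_subL[of x0 a b] eint_subR[of x0 a b] x0 unfolding I_def by meson
        qed
        show ?thesis using ex1_cong[OF EQ] E by blast
      qed
    }
    {
      assume g: "\<forall>x\<in>I. g' x < 0"
      show "\<exists>!x0\<in>I. (\<forall>x\<in>eint a (ereal x0). D x < 0) \<and> (\<forall>x\<in>eint (ereal x0) b. D x > 0)"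
      proof -
        have EQ: "\<forall>x0\<in>I. ((\<forall>x\<in>eint a (ereal x0). D x < 0) \<and> (\<forall>x\<in>eint (ereal x0) b. D x > 0)) \<longleftrightarrow>
              ((\<forall>x\<in>eint a (ereal x0). H x > 0) \<and> (\<forall>x\<in>eint (ereal x0) b. H x < 0))"
        proof
          fix x0 assume x0: "x0 \<in> I"
          show "((\<forall>x\<in>eint a (ereal x0). D x < 0) \<and> (\<forall>x\<in>eint (ereal x0) b. D x > 0)) \<longleftrightarrow>
              ((\<forall>x\<in>eint a (ereal x0). H x > 0) \<and> (\<forall>x\<in>eint (ereal x0) b. H x < 0))"
            using s2 g eint_subL[of x0 a b] eint_subR[of x0 a b] x0 unfolding I_def by meson
        qed
        show ?thesis using ex1_cong[OF EQ] E by blast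
      qed
    }
  qed
  show ?thesis
    using P1 P2 P3 P4 P5 P6 unfolding I_def D_def L_def U_def by blast
qed


end
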